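(* Let $0<\mu\le L$, $f\in\mathcal S^1_{\mu,L}(\mathbb R^n)$ with minimizer $x^*$, $\beta\in[0,1]$, and $s>0$ with $\mu s<1$. Let $(x_k)$, $(v_k)$ and $\mathcal E_\beta(k)$ be as in the context. Then for every $k\ge0$, $$\mathcal E_\beta(k)\le\left(\frac{1}{1-\sqrt{\mu s}}+\frac{\beta^2Ls}{2}\right)\big(f(x_k)-f(x^* )\big)+\frac{1+\sqrt{\mu s}+\mu s}{(1-\sqrt{\mu s})^2}\|v_k\|^2+\frac{3\mu}{(1-\sqrt{\mu s})^2}\|x_k-x^*\|^2$$ $$\qquad+\frac{\sqrt{\mu s}}{1-\sqrt{\mu s}}\left[f(x_k)-f(x^* )-\frac{\beta^2s\sqrt{\mu s}-(\beta^2-\beta)s}{2\sqrt{\mu s}}\|\nabla f(x_k)\|^2\right].$$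
   Context: $\mathcal S^1_{\mu,L}(\mathbb R^n)$: differentiable, $\mu$-strongly convex $f:\mathbb R^n\to\mathbb R$ (i.e. $f(y)\ge f(x)+\langle\nabla f(x),y-x\rangle+\frac\mu2\|y-x\|^2$) with $L$-Lipschitz gradient. The sequence: $x_0\in\mathbb R^n$, $x_1=x_0-\frac{2s\nabla f(x_0)}{1+\sqrt{\mu s}}$, and for $k\ge1$, $x_{k+1}=x_k+\frac{1-\sqrt{\mu s}}{1+\sqrt{\mu s}}(x_k-x_{k-1})-s\nabla f(x_k)-\beta\frac{1-\sqrt{\mu s}}{1+\sqrt{\mu s}}s(\nabla f(x_k)-\nabla f(x_{k-1}))$. Velocities $v_k=\frac{x_{k+1}-x_k}{\sqrt s}$. Discrete energy: $$\mathcal E_\beta(k)=\frac{1+\sqrt{\mu s}}{1-\sqrt{\mu s}}\big(f(x_k)-f(x^* )\big)+\frac14\|v_k\|^2+\frac14\Big\|v_k+\frac{2\sqrt\mu}{1-\sqrt{\mu s}}(x_k-x^* )+\beta\sqrt s\,\nabla f(x_k)\Big\|^2-\frac{\beta s\|\nabla f(x_k)\|^2}{2(1-\sqrt{\mu s})}.$$ *)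

theory Defs
  imports "HOL-Analysis.Analysis"
begin

definition vel :: "real \<Rightarrow> (nat \<Rightarrow> 'a::real_vector) \<Rightarrow> nat \<Rightarrow> 'a" where
  "vel s x k = (1 / sqrt s) *\<^sub>R (x (Suc k) - x k)"

definition energy ::
  "('a::real_inner \<Rightarrow> real) \<Rightarrow> ('a \<Rightarrow> 'a) \<Rightarrow> real \<Rightarrow> real \<Rightarrow> real \<Rightarrow> 'a \<Rightarrow> (nat \<Rightarrow> 'a) \<Rightarrow> nat \<Rightarrow> real"
  where
  "energy f g \<mu> s \<beta> xs x k =
     (1 + sqrt (\<mu> * s)) / (1 - sqrt (\<mu> * s)) * (f (x k) - f xs)
     + 1/4 * (norm (vel s x k))^2
     + 1/4 * (norm (vel s x k + (2 * sqrt \<mu> / (1 - sqrt (\<mu> * s))) *\<^sub>R (x k - xs)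
                    + (\<beta> * sqrt s) *\<^sub>R g (x k)))^2
     - \<beta> * s * (norm (g (x k)))^2 / (2 * (1 - sqrt (\<mu> * s)))"

end

theory Submission imports Defs begin
lemma descent:
  fixes f :: "'a::euclidean_space \<Rightarrow> real" and g :: "'a \<Rightarrow> 'a"
  assumes grad: "\<And>y. (f has_derivative (\<lambda>h. g y \<bullet> h)) (at y)"
    and lipschitz: "\<And>y z. norm (g y - g z) \<le> L * norm (y - z)"
  shows "f (x + h) \<le> f x + g x \<bullet> h + L / 2 * (norm h)^2"
proof -
  define \<phi> where "\<phi> t = f (x + t *\<^sub>R h) - t * (g x \<bullet> h) - L / 2 * t^2 * (norm h)^2" for t
  have D: "(\<phi> has_real_derivative (g (x + t *\<^sub>R h) \<bullet> h - g x \<bullet> h - L * t * (norm h)^2)) (at t)" for t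
  proof -
    have l: "((\<lambda>t. x + t *\<^sub>R h) has_derivative (\<lambda>d. d *\<^sub>R h)) (at t)"
      by (auto intro!: derivative_eq_intros)
    have "((\<lambda>t. f (x + t *\<^sub>R h)) has_derivative (\<lambda>d. g (x + t *\<^sub>R h) \<bullet> (d *\<^sub>R h))) (at t)"
      using has_derivative_compose[OF l grad] by (simp add: o_def)
    hence "((\<lambda>t. f (x + t *\<^sub>R h)) has_real_derivative (g (x + t *\<^sub>R h) \<bullet> h)) (at t)"
      by (simp add: has_field_derivative_def mult.commute[of _ "g (x + t *\<^sub>R h) \<bullet> h"])
    then show ?thesis unfolding \<phi>_def
      by (auto intro!: derivative_eq_intros)
  qed
  have "\<phi> 1 \<le> \<phi> 0"
  proof (rule DERIV_nonpos_imp_nonincreasing[of 0 1 \<phi>])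
    fix t :: real assume t: "0 \<le> t" "t \<le> 1"
    have "g (x + t *\<^sub>R h) \<bullet> h - g x \<bullet> h = (g (x + t *\<^sub>R h) - g x) \<bullet> h"
      by (simp add: inner_diff_left)
    also have "\<dots> \<le> norm (g (x + t *\<^sub>R h) - g x) * norm h"
      by (rule norm_cauchy_schwarz)
    also have "\<dots> \<le> L * norm (t *\<^sub>R h) * norm h"
      using lipschitz[of "x + t *\<^sub>R h" x] by (simp add: mult_right_mono)
    also have "\<dots> = L * t * (norm h)^2" using t by (simp add: power2_eq_square)
    finally show "\<exists>y. (\<phi> has_real_derivative y) (at t) \<and> y \<le> 0"
      using D[of t] by (intro exI[of _ "g (x + t *\<^sub>R h) \<bullet> h - g x \<bullet> h - L * t * (norm h)^2"]) auto
  qed simp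
  then show ?thesis unfolding \<phi>_def by simp
qed
lemma sq3: fixes p q t :: real shows "(p + q + t)^2 \<le> 3 * (p^2 + q^2 + t^2)"
proof -
  have "3 * (p^2 + q^2 + t^2) - (p + q + t)^2 = (p - q)^2 + (q - t)^2 + (p - t)^2"
    by (simp add: power2_eq_square algebra_simps)
  moreover have "(p - q)^2 + (q - t)^2 + (p - t)^2 \<ge> 0" by simp
  ultimately show ?thesis by linarith
qed

lemma norm3: fixes a b c :: "'a::real_inner"
  shows "(norm (a + b + c))^2 \<le> 3 * ((norm a)^2 + (norm b)^2 + (norm c)^2)"
proof -
  have "norm (a + b + c) \<le> norm a + norm b + norm c"
    by (metis add_right_mono norm_triangle_ineq order_trans)
  hence "(norm (a + b + c))^2 \<le> (norm a + norm b + norm c)^2"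
    by (simp add: power_mono)
  also have "\<dots> \<le> 3 * ((norm a)^2 + (norm b)^2 + (norm c)^2)"
    using sq3[of "norm a" "norm b" "norm c"] .
  finally show ?thesis .
qed

lemma gradbound:
  fixes f :: "'a::euclidean_space \<Rightarrow> real" and g :: "'a \<Rightarrow> 'a"
  assumes grad: "\<And>y. (f has_derivative (\<lambda>h. g y \<bullet> h)) (at y)"
    and lipschitz: "\<And>y z. norm (g y - g z) \<le> L * norm (y - z)"
    and minimizer: "\<And>y. f xs \<le> f y" and L: "L > 0"
  shows "(norm (g x))^2 \<le> 2 * L * (f x - f xs)"
proof -
  have "f xs \<le> f (x + (- (1/L)) *\<^sub>R g x)" by (rule minimizer)
  also have "\<dots> \<le> f x + g x \<bullet> ((- (1/L)) *\<^sub>R g x) + L / 2 * (norm ((- (1/L)) *\<^sub>R g x))^2"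
    by (rule descent[OF grad lipschitz])
  also have "\<dots> = f x - (norm (g x))^2 / (2 * L)"
    using L by (simp add: power2_norm_eq_inner[symmetric] field_simps power2_eq_square)
  finally show ?thesis using L by (simp add: field_simps)
qed
theorem lemma5p1:
  fixes f :: "real ^ 'n \<Rightarrow> real" and g :: "real ^ 'n \<Rightarrow> real ^ 'n"
    and \<mu> L s \<beta> :: real and xs :: "real ^ 'n" and x :: "nat \<Rightarrow> real ^ 'n"
  assumes mu_pos: "0 < \<mu>" and mu_le_L: "\<mu> \<le> L"
    and grad: "\<And>y. (f has_derivative (\<lambda>h. g y \<bullet> h)) (at y)"
    and strong_convex: "\<And>y z. f z \<ge> f y + g y \<bullet> (z - y) + \<mu> / 2 * (norm (z - y))^2"
    and lipschitz: "\<And>y z. norm (g y - g z) \<le> L * norm (y - z)"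
    and minimizer: "\<And>y. f xs \<le> f y"
    and beta: "0 \<le> \<beta>" "\<beta> \<le> 1"
    and s_pos: "0 < s" and mus: "\<mu> * s < 1"
    and x1: "x 1 = x 0 - (2 * s / (1 + sqrt (\<mu> * s))) *\<^sub>R g (x 0)"
    and xrec: "\<And>k. k \<ge> 1 \<Longrightarrow> x (Suc k) = x k
        + ((1 - sqrt (\<mu> * s)) / (1 + sqrt (\<mu> * s))) *\<^sub>R (x k - x (k - 1))
        - s *\<^sub>R g (x k)
        - (\<beta> * ((1 - sqrt (\<mu> * s)) / (1 + sqrt (\<mu> * s))) * s) *\<^sub>R (g (x k) - g (x (k - 1)))"
  shows "energy f g \<mu> s \<beta> xs x k \<le>
      (1 / (1 - sqrt (\<mu> * s)) + \<beta>^2 * L * s / 2) * (f (x k) - f xs)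
    + (1 + sqrt (\<mu> * s) + \<mu> * s) / (1 - sqrt (\<mu> * s))^2 * (norm (vel s x k))^2
    + 3 * \<mu> / (1 - sqrt (\<mu> * s))^2 * (norm (x k - xs))^2
    + sqrt (\<mu> * s) / (1 - sqrt (\<mu> * s)) *
        (f (x k) - f xs
         - (\<beta>^2 * s * sqrt (\<mu> * s) - (\<beta>^2 - \<beta>) * s) / (2 * sqrt (\<mu> * s))
           * (norm (g (x k)))^2)"
proof -
  define r where "r = sqrt (\<mu> * s)"
  define a where "a = 1 - r"
  define v where "v = vel s x k"
  define d where "d = x k - xs"
  define G where "G = g (x k)"
  define F where "F = f (x k) - f xs"
  define K where "K = \<beta>^2 * s * r - (\<beta>^2 - \<beta>) * s"
  have r0: "r > 0" unfolding r_def using mu_pos s_pos by simp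
  have r1: "r < 1" unfolding r_def using mus by simp
  have rr: "r^2 = \<mu> * s" unfolding r_def using mu_pos s_pos by simp
  have a0: "a > 0" "a \<le> 1" using r0 r1 unfolding a_def by auto
  have L0: "L > 0" using mu_pos mu_le_L by simp
  have F0: "F \<ge> 0" unfolding F_def using minimizer[of "x k"] by simp
  have gb: "(norm G)^2 \<le> 2 * L * F" unfolding G_def F_def
    by (rule gradbound[OF grad lipschitz minimizer L0])
  have N: "(norm (v + (2 * sqrt \<mu> / a) *\<^sub>R d + (\<beta> * sqrt s) *\<^sub>R G))^2
      \<le> 3 * ((norm v)^2 + 4 * \<mu> / a^2 * (norm d)^2 + \<beta>^2 * s * (norm G)^2)"
  proof -
    have "(norm ((2 * sqrt \<mu> / a) *\<^sub>R d))^2 = 4 * \<mu> / a^2 * (norm d)^2"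
      using mu_pos by (simp add: power_mult_distrib power_divide)
    moreover have "(norm ((\<beta> * sqrt s) *\<^sub>R G))^2 = \<beta>^2 * s * (norm G)^2"
      using s_pos by (simp add: power_mult_distrib)
    ultimately show ?thesis using norm3[of v "(2 * sqrt \<mu> / a) *\<^sub>R d" "(\<beta> * sqrt s) *\<^sub>R G"] by simp
  qed
  have E: "energy f g \<mu> s \<beta> xs x k = (1 + r) / a * F + 1/4 * (norm v)^2
      + 1/4 * (norm (v + (2 * sqrt \<mu> / a) *\<^sub>R d + (\<beta> * sqrt s) *\<^sub>R G))^2
      - \<beta> * s * (norm G)^2 / (2 * a)"
    unfolding energy_def r_def a_def v_def d_def G_def F_def by simp
  have RHS: "(1 / (1 - sqrt (\<mu> * s)) + \<beta>^2 * L * s / 2) * (f (x k) - f xs)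
    + (1 + sqrt (\<mu> * s) + \<mu> * s) / (1 - sqrt (\<mu> * s))^2 * (norm (vel s x k))^2
    + 3 * \<mu> / (1 - sqrt (\<mu> * s))^2 * (norm (x k - xs))^2
    + sqrt (\<mu> * s) / (1 - sqrt (\<mu> * s)) *
        (f (x k) - f xs
         - (\<beta>^2 * s * sqrt (\<mu> * s) - (\<beta>^2 - \<beta>) * s) / (2 * sqrt (\<mu> * s))
           * (norm (g (x k)))^2)
    = (1 / a + \<beta>^2 * L * s / 2) * F + (1 + r + r^2) / a^2 * (norm v)^2
      + 3 * \<mu> / a^2 * (norm d)^2 + r / a * F - K / (2 * a) * (norm G)^2"
  proof -
    have "r / a * (F - K / (2 * r) * (norm G)^2) = r / a * F - K / (2 * a) * (norm G)^2"
      using r0 a0 by (simp add: field_simps)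
    then show ?thesis unfolding r_def[symmetric] a_def[symmetric] v_def[symmetric] d_def[symmetric]
        G_def[symmetric] F_def[symmetric] K_def[symmetric] rr by simp
  qed
  have kk: "- K / (2 * a) * (norm G)^2 = \<beta>^2 * s * (norm G)^2 / 2 - \<beta> * s * (norm G)^2 / (2 * a)"
    using a0 unfolding K_def a_def by (simp add: field_simps)
  have ff: "(1 / a) * F + r / a * F = (1 + r) / a * F" using a0 by (simp add: field_simps)
  have vv: "(norm v)^2 \<le> (1 + r + r^2) / a^2 * (norm v)^2"
  proof -
    have "a^2 \<le> 1 + r + r^2" using a0 r0 by (simp add: power_le_one order_trans[of "a^2" 1])
    hence "1 \<le> (1 + r + r^2) / a^2" using a0 by simp
    thus ?thesis by (metis mult_left_mono mult_1 mult.commute zero_le_power2)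
  qed
  have gg: "\<beta>^2 * s * (norm G)^2 / 4 \<le> \<beta>^2 * L * s / 2 * F"
  proof -
    have "\<beta>^2 * s * (norm G)^2 \<le> \<beta>^2 * s * (2 * L * F)"
      using gb s_pos by (simp add: mult_left_mono)
    thus ?thesis by (simp add: algebra_simps)
  qed
  define P where "P = \<beta>^2 * s * (norm G)^2"
  define Q where "Q = \<beta> * s * (norm G)^2 / (2 * a)"
  define D where "D = \<mu> / a^2 * (norm d)^2"
  define NN where "NN = (norm (v + (2 * sqrt \<mu> / a) *\<^sub>R d + (\<beta> * sqrt s) *\<^sub>R G))^2"
  have N': "NN \<le> 3 * (norm v)^2 + 12 * D + 3 * P" using N unfolding NN_def D_def P_def by (simp add: algebra_simps)
  have kk': "K / (2 * a) * (norm G)^2 = Q - P / 2" proof -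
    have "K / (2 * a) * (norm G)^2 = - (- K / (2 * a) * (norm G)^2)" by simp
    then show ?thesis using kk unfolding P_def Q_def by linarith
  qed
  have gg': "P / 4 \<le> \<beta>^2 * L * s / 2 * F" using gg unfolding P_def .
  have d3: "3 * \<mu> / a^2 * (norm d)^2 = 3 * D" unfolding D_def by simp
  have EE: "energy f g \<mu> s \<beta> xs x k = (1 + r) / a * F + 1/4 * (norm v)^2 + 1/4 * NN - Q"
    unfolding E NN_def Q_def by simp
  have dd: "(1 / a + \<beta>^2 * L * s / 2) * F = 1 / a * F + \<beta>^2 * L * s / 2 * F"
    by (simp add: distrib_right)
  show ?thesis unfolding EE RHS d3 dd using N' kk' ff vv gg' by linarith
qed

end
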